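(* Let $n\ge 2$, let $A\in\mathbb{R}^{n\times n}$ be symmetric with zero diagonal, let $\lambda\ge\max_i\sum_j|A_{ij}|$, and let $v^*\in\mathbb{R}^{n-1}$ with $v^*_i=A_{ni}$. Let $w^*=\Pi^{n-1}_{B\to\Delta}(v^* )\in\Delta(\lambda,2n-1)$. Then $\nabla\widetilde S(w^* )=0$ and $w^*$ is a global minimizer of $\widetilde S$ over $\Delta(\lambda,2n-1)$.
   Context: Ising model $\mathcal{D}(A,\theta)$ on $\{-1,1\}^n$: $\Pr[Z=z]\propto\exp\big(\sum_{i<j}A_{ij}z_iz_j+\sum_i\theta_iz_i\big)$, $A$ symmetric with zero diagonal. $\mathsf{B}(W,k)=\{x\in\mathbb{R}^k:\|x\|_1\le W\}$, $\Delta(W,k)=\{x\in\mathbb{R}^k:x\ge0,\sum_ix_i=W\}$. Maps: $\Pi^k_{B\to\Delta}:\mathsf{B}(W,k)\to\Delta(W,2k+1)$ with $\Pi^k_{B\to\Delta}(x)_{2k+1}=W-\|x\|_1$, $\Pi^k_{B\to\Delta}(x)_i=\max(x_i,0)$ and $\Pi^k_{B\to\Delta}(x)_{k+i}=\max(-x_i,0)$ for $i\in[k]$; $\Pi^k_{\Delta\to B}:\Delta(W,2k+1)\to\mathsf{B}(W,k)$ with $\Pi^k_{\Delta\to B}(u)_i=u_i-u_{i+k}$, $i\in[k]$. Simplex ISO: for $w\in\mathbb{R}^{2n-1}$, $\widetilde S(w)=\mathbb{E}_{Z\sim\mathcal{D}(A,0)}\big[\exp\big(-\sum_{j=1}^{n-1}(w_j-w_{n-1+j})Z_nZ_j\big)\big]$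 (which equals $S(\Pi^{n-1}_{\Delta\to B}(w))$ for the ISO $S(v)=\mathbb{E}[\exp(-\sum_{j=1}^{n-1}v_jZ_nZ_j)]$). *)

theory Defs
  imports "HOL-Analysis.Analysis"
begin

text \<open>Vectors in R^k are represented as functions nat => real, indexed by 1..k
  and extensional (zero outside 1..k). Matrices are nat => nat => real, indexed 1..n.\<close>

definition spins :: "nat \<Rightarrow> (nat \<Rightarrow> real) set" where
  "spins n = PiE {1..n} (\<lambda>_. {-1, 1})"

definition ising_weight :: "nat \<Rightarrow> (nat \<Rightarrow> nat \<Rightarrow> real) \<Rightarrow> (nat \<Rightarrow> real) \<Rightarrow> (nat \<Rightarrow> real) \<Rightarrow> real" where
  "ising_weight n A \<theta> z =
     exp ((\<Sum>i\<in>{1..n}. \<Sum>j\<in>{i<..n}. A i j * z i * z j) + (\<Sum>i\<in>{1..n}. \<theta> i * z i))"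

definition ising_expect :: "nat \<Rightarrow> (nat \<Rightarrow> nat \<Rightarrow> real) \<Rightarrow> (nat \<Rightarrow> real) \<Rightarrow> ((nat \<Rightarrow> real) \<Rightarrow> real) \<Rightarrow> real" where
  "ising_expect n A \<theta> f =
     (\<Sum>z\<in>spins n. ising_weight n A \<theta> z * f z) / (\<Sum>z\<in>spins n. ising_weight n A \<theta> z)"

definition simplexW :: "real \<Rightarrow> nat \<Rightarrow> (nat \<Rightarrow> real) set" where
  "simplexW W k = {x. (\<forall>i\<in>{1..k}. 0 \<le> x i) \<and> (\<Sum>i\<in>{1..k}. x i) = W \<and> (\<forall>i. i \<notin> {1..k} \<longrightarrow> x i = 0)}"

definition Pi_B_Delta :: "nat \<Rightarrow> real \<Rightarrow> (nat \<Rightarrow> real) \<Rightarrow> (nat \<Rightarrow> real)" where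
  "Pi_B_Delta k W x = (\<lambda>i.
     if 1 \<le> i \<and> i \<le> k then max (x i) 0
     else if k < i \<and> i \<le> 2*k then max (- x (i - k)) 0
     else if i = 2*k + 1 then W - (\<Sum>j\<in>{1..k}. \<bar>x j\<bar>)
     else 0)"

definition simplex_ISO :: "nat \<Rightarrow> (nat \<Rightarrow> nat \<Rightarrow> real) \<Rightarrow> (nat \<Rightarrow> real) \<Rightarrow> real" where
  "simplex_ISO n A w =
     ising_expect n A (\<lambda>_. 0)
       (\<lambda>z. exp (- (\<Sum>j\<in>{1..n-1}. (w j - w (n - 1 + j)) * z n * z j)))"

end

theory Submission
  imports Defs
begin

lemma Q_split:
  fixes A :: "nat \<Rightarrow> nat \<Rightarrow> real" and z :: "nat \<Rightarrow> real"
  assumes sym: "\<forall>i\<in>{1..Suc m}. \<forall>j\<in>{1..Suc m}. A i j = A j i"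
  shows "(\<Sum>i\<in>{1..Suc m}. \<Sum>j\<in>{i<..Suc m}. A i j * z i * z j)
       = (\<Sum>i\<in>{1..m}. \<Sum>j\<in>{i<..m}. A i j * z i * z j)
         + (\<Sum>i\<in>{1..m}. A (Suc m) i * z (Suc m) * z i)"
proof -
  have "(\<Sum>i\<in>{1..Suc m}. \<Sum>j\<in>{i<..Suc m}. A i j * z i * z j)
      = (\<Sum>i\<in>{1..m}. \<Sum>j\<in>{i<..Suc m}. A i j * z i * z j)"
    by (simp add: sum.cl_ivl_Suc)
  also have "\<dots> = (\<Sum>i\<in>{1..m}. (\<Sum>j\<in>{i<..m}. A i j * z i * z j) + A (Suc m) i * z (Suc m) * z i)"
  proof (rule sum.cong[OF refl])
    fix i assume i: "i \<in> {1..m}"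
    have e: "{i<..Suc m} = insert (Suc m) {i<..m}" using i by auto
    have a: "A i (Suc m) * z i * z (Suc m) = A (Suc m) i * z (Suc m) * z i" using sym i by (auto simp: mult_ac)
    have fin: "finite {i<..m}" by simp
    show "(\<Sum>j\<in>{i<..Suc m}. A i j * z i * z j) = (\<Sum>j\<in>{i<..m}. A i j * z i * z j) + A (Suc m) i * z (Suc m) * z i"
      unfolding e sum.insert[OF fin, of "Suc m"] using a by simp
  qed
  also have "\<dots> = (\<Sum>i\<in>{1..m}. \<Sum>j\<in>{i<..m}. A i j * z i * z j)
         + (\<Sum>i\<in>{1..m}. A (Suc m) i * z (Suc m) * z i)"
    by (simp add: sum.distrib)
  finally show ?thesis .
qed

lemma key:
  assumes sym: "\<forall>i\<in>{1..Suc m}. \<forall>j\<in>{1..Suc m}. A i j = A j i" and k: "k \<in> {1..m}"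
  shows "(\<Sum>z\<in>spins (Suc m). ising_weight (Suc m) A (\<lambda>_. 0) z
            * exp (- (\<Sum>j\<in>{1..m}. A (Suc m) j * z (Suc m) * z j)) * (z (Suc m) * z k)) = 0"
proof -
  define R where "R z = (\<Sum>i\<in>{1..m}. \<Sum>j\<in>{i<..m}. A i j * z i * z j)" for z :: "nat \<Rightarrow> real"
  define f where "f z = exp (R z) * (z (Suc m) * z k)" for z :: "nat \<Rightarrow> real"
  have eq: "ising_weight (Suc m) A (\<lambda>_. 0) z
            * exp (- (\<Sum>j\<in>{1..m}. A (Suc m) j * z (Suc m) * z j)) * (z (Suc m) * z k) = f z" for z
    unfolding ising_weight_def f_def R_def Q_split[OF sym]
    by (simp add: exp_add[symmetric] exp_diff[symmetric])
  define \<sigma> where "\<sigma> z = z(Suc m := - z (Suc m))" for z :: "nat \<Rightarrow> real"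
  have ss: "\<sigma> z \<in> spins (Suc m)" if "z \<in> spins (Suc m)" for z
    using that unfolding spins_def \<sigma>_def PiE_def Pi_def extensional_def by auto
  have inv: "\<sigma> (\<sigma> z) = z" for z unfolding \<sigma>_def by auto
  have bij: "bij_betw \<sigma> (spins (Suc m)) (spins (Suc m))"
    by (rule bij_betw_byWitness[where f'=\<sigma>]) (auto simp: inv ss)
  have R\<sigma>: "R (\<sigma> z) = R z" for z unfolding R_def \<sigma>_def by (intro sum.cong) auto
  have f\<sigma>: "f (\<sigma> z) = - f z" for z
    using k unfolding f_def R\<sigma> by (simp add: \<sigma>_def)
  have "sum f (spins (Suc m)) = sum (\<lambda>z. f (\<sigma> z)) (spins (Suc m))"
    using sum.reindex_bij_betw[OF bij, of f] by simp
  also have "\<dots> = - sum f (spins (Suc m))" by (simp add: f\<sigma> sum_negf)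
  finally have "sum f (spins (Suc m)) = 0" by simp
  then show ?thesis unfolding eq .
qed

lemma D_pos: "0 < (\<Sum>z\<in>spins N. ising_weight N A \<theta> z)"
proof (rule sum_pos)
  show "finite (spins N)" unfolding spins_def by (rule finite_PiE) auto
  show "spins N \<noteq> {}" unfolding spins_def by (simp add: PiE_eq_empty_iff)
  show "\<And>z. z \<in> spins N \<Longrightarrow> 0 < ising_weight N A \<theta> z" unfolding ising_weight_def by simp
qed

lemma upd_deriv: "D = (if j = k then 1 else 0) \<Longrightarrow> ((\<lambda>t. (w(k:=t)) j) has_real_derivative D) (at x)"
  by (cases "j = k") (auto intro: derivative_eq_intros)

lemma deriv_gen:
  fixes A :: "nat \<Rightarrow> nat \<Rightarrow> real" and w0 :: "nat \<Rightarrow> real"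
  shows "((\<lambda>t. simplex_ISO (Suc m) A (w0(k := t))) has_real_derivative
     (\<Sum>z\<in>spins (Suc m). ising_weight (Suc m) A (\<lambda>_. 0) z *
        (exp (- (\<Sum>j\<in>{1..m}. (w0 j - w0 (m + j)) * z (Suc m) * z j)) *
         (- (\<Sum>j\<in>{1..m}. ((if j = k then 1 else 0) - (if m + j = k then 1 else 0)) * z (Suc m) * z j))))
     / (\<Sum>z\<in>spins (Suc m). ising_weight (Suc m) A (\<lambda>_. 0) z)) (at (w0 k))"
  unfolding simplex_ISO_def ising_expect_def
  apply (rule derivative_eq_intros upd_deriv refl | assumption)+
  using D_pos[of "Suc m" A "\<lambda>_. 0"]
  apply (simp_all add: mult_ac)
  done

lemma key2:
  assumes sym: "\<forall>i\<in>{1..Suc m}. \<forall>j\<in>{1..Suc m}. A i j = A j i"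
  shows "(\<Sum>z\<in>spins (Suc m). ising_weight (Suc m) A (\<lambda>_. 0) z
            * (exp (- (\<Sum>j\<in>{1..m}. A (Suc m) j * z (Suc m) * z j)) * (\<Sum>j\<in>{1..m}. c j * z (Suc m) * z j))) = 0"
proof -
  have "(\<Sum>z\<in>spins (Suc m). ising_weight (Suc m) A (\<lambda>_. 0) z
            * (exp (- (\<Sum>j\<in>{1..m}. A (Suc m) j * z (Suc m) * z j)) * (\<Sum>j\<in>{1..m}. c j * z (Suc m) * z j)))
     = (\<Sum>z\<in>spins (Suc m). \<Sum>j\<in>{1..m}. c j * (ising_weight (Suc m) A (\<lambda>_. 0) z
            * exp (- (\<Sum>j\<in>{1..m}. A (Suc m) j * z (Suc m) * z j)) * (z (Suc m) * z j)))"
    by (intro sum.cong refl, subst mult.assoc[symmetric], subst sum_distrib_left, intro sum.cong refl) (simp add: mult_ac)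
  also have "\<dots> = (\<Sum>j\<in>{1..m}. c j * (\<Sum>z\<in>spins (Suc m). ising_weight (Suc m) A (\<lambda>_. 0) z
            * exp (- (\<Sum>j\<in>{1..m}. A (Suc m) j * z (Suc m) * z j)) * (z (Suc m) * z j)))"
    by (subst sum.swap) (simp add: sum_distrib_left)
  also have "\<dots> = 0" using key[OF sym] by simp
  finally show ?thesis .
qed

lemma min_gen:
  fixes A :: "nat \<Rightarrow> nat \<Rightarrow> real" and w0 w :: "nat \<Rightarrow> real"
  assumes sym: "\<forall>i\<in>{1..Suc m}. \<forall>j\<in>{1..Suc m}. A i j = A j i"
    and wj: "\<forall>j\<in>{1..m}. w0 j - w0 (m + j) = A (Suc m) j"
  shows "simplex_ISO (Suc m) A w0 \<le> simplex_ISO (Suc m) A w"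
proof -
  define W where "W z = ising_weight (Suc m) A (\<lambda>_. 0) z" for z
  define E0 where "E0 z = - (\<Sum>j\<in>{1..m}. A (Suc m) j * z (Suc m) * z j)" for z :: "nat \<Rightarrow> real"
  define E where "E z = - (\<Sum>j\<in>{1..m}. (w j - w (m + j)) * z (Suc m) * z j)" for z :: "nat \<Rightarrow> real"
  define c where "c j = A (Suc m) j - (w j - w (m + j))" for j
  have e0: "(\<Sum>j\<in>{1..m}. (w0 j - w0 (m + j)) * z (Suc m) * z j) = - E0 z" for z
    unfolding E0_def minus_minus using wj by (intro sum.cong refl) simp
  have diff: "E z - E0 z = (\<Sum>j\<in>{1..m}. c j * z (Suc m) * z j)" for z
    unfolding E_def E0_def c_def by (simp add: sum_subtractf[symmetric] left_diff_distrib)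
  have pt: "W z * exp (E0 z) + W z * (exp (E0 z) * (\<Sum>j\<in>{1..m}. c j * z (Suc m) * z j)) \<le> W z * exp (E z)" for z
  proof -
    have W0: "0 \<le> W z" unfolding W_def ising_weight_def by simp
    have "exp (E0 z) * (1 + (E z - E0 z)) \<le> exp (E0 z) * exp (E z - E0 z)"
      by (rule mult_left_mono) auto
    also have "\<dots> = exp (E z)" by (simp add: exp_diff)
    finally have "exp (E0 z) + exp (E0 z) * (\<Sum>j\<in>{1..m}. c j * z (Suc m) * z j) \<le> exp (E z)"
      unfolding diff by (simp add: algebra_simps)
    from mult_left_mono[OF this W0] show ?thesis by (simp add: distrib_left)
  qed
  have "(\<Sum>z\<in>spins (Suc m). W z * exp (E0 z)) + 0 \<le> (\<Sum>z\<in>spins (Suc m). W z * exp (E z))"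
  proof -
    have "(\<Sum>z\<in>spins (Suc m). W z * exp (E0 z)) + (\<Sum>z\<in>spins (Suc m). W z * (exp (E0 z) * (\<Sum>j\<in>{1..m}. c j * z (Suc m) * z j)))
       \<le> (\<Sum>z\<in>spins (Suc m). W z * exp (E z))"
      unfolding sum.distrib[symmetric] by (rule sum_mono) (rule pt)
    moreover have "(\<Sum>z\<in>spins (Suc m). W z * (exp (E0 z) * (\<Sum>j\<in>{1..m}. c j * z (Suc m) * z j))) = 0"
      unfolding W_def E0_def by (rule key2[OF sym])
    ultimately show ?thesis by simp
  qed
  then have "(\<Sum>z\<in>spins (Suc m). W z * exp (E0 z)) / (\<Sum>z\<in>spins (Suc m). W z)
     \<le> (\<Sum>z\<in>spins (Suc m). W z * exp (E z)) / (\<Sum>z\<in>spins (Suc m). W z)"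
    using D_pos[of "Suc m" A "\<lambda>_. 0"] unfolding W_def by (intro divide_right_mono) auto
  moreover have "simplex_ISO (Suc m) A w0 = (\<Sum>z\<in>spins (Suc m). W z * exp (E0 z)) / (\<Sum>z\<in>spins (Suc m). W z)"
    unfolding simplex_ISO_def ising_expect_def W_def using e0 by simp
  moreover have "simplex_ISO (Suc m) A w = (\<Sum>z\<in>spins (Suc m). W z * exp (E z)) / (\<Sum>z\<in>spins (Suc m). W z)"
    unfolding simplex_ISO_def ising_expect_def W_def E_def by simp
  ultimately show ?thesis by simp
qed

theorem mainTheorem4:
  fixes n :: nat and A :: "nat \<Rightarrow> nat \<Rightarrow> real" and lam :: real
    and vstar wstar :: "nat \<Rightarrow> real"
  assumes "n \<ge> 2"
    and "\<forall>i\<in>{1..n}. \<forall>j\<in>{1..n}. A i j = A j i"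
    and "\<forall>i\<in>{1..n}. A i i = 0"
    and "\<forall>i\<in>{1..n}. (\<Sum>j\<in>{1..n}. \<bar>A i j\<bar>) \<le> lam"
    and "vstar = (\<lambda>i. if i \<in> {1..n-1} then A n i else 0)"
    and "wstar = Pi_B_Delta (n - 1) lam vstar"
  shows "wstar \<in> simplexW lam (2*n - 1)
    \<and> (\<forall>k\<in>{1..2*n-1}. ((\<lambda>t. simplex_ISO n A (wstar(k := t))) has_real_derivative 0) (at (wstar k)))
    \<and> (\<forall>w\<in>simplexW lam (2*n - 1). simplex_ISO n A wstar \<le> simplex_ISO n A w)"
proof -
  obtain m where n: "n = Suc m" and m1: "1 \<le> m" using assms(1) by (cases n) auto
  have sym: "\<forall>i\<in>{1..Suc m}. \<forall>j\<in>{1..Suc m}. A i j = A j i" using assms(2) n by simp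
  have ws1: "wstar j = max (A (Suc m) j) 0" if "j \<in> {1..m}" for j
    using that unfolding assms(6) assms(5) n Pi_B_Delta_def by auto
  have ws2: "wstar (m + j) = max (- A (Suc m) j) 0" if "j \<in> {1..m}" for j
    using that unfolding assms(6) assms(5) n Pi_B_Delta_def by auto
  have ws3: "wstar (2*m+1) = lam - (\<Sum>j\<in>{1..m}. \<bar>A (Suc m) j\<bar>)"
    unfolding assms(6) assms(5) n Pi_B_Delta_def using m1 by (auto intro!: sum.cong)
  have ws0: "wstar i = 0" if "i \<notin> {1..2*m+1}" for i
    using that unfolding assms(6) n Pi_B_Delta_def by auto
  have wj: "\<forall>j\<in>{1..m}. wstar j - wstar (m + j) = A (Suc m) j"
    using ws1 ws2 by auto
  have P1: "wstar \<in> simplexW lam (2*n - 1)"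
  proof -
    have rowN: "(\<Sum>j\<in>{1..Suc m}. \<bar>A (Suc m) j\<bar>) \<le> lam" using assms(4) n by auto
    have "A (Suc m) (Suc m) = 0" using assms(3) n by auto
    then have rowsum: "(\<Sum>j\<in>{1..m}. \<bar>A (Suc m) j\<bar>) \<le> lam" using rowN by (simp add: sum.cl_ivl_Suc)
    have nonneg: "0 \<le> wstar i" if iin: "i \<in> {1..2*m+1}" for i
    proof -
      consider "i \<le> m" | "m < i \<and> i \<le> 2*m" | "i = 2*m+1" using iin by force
      then show ?thesis
      proof cases
        case 1 then show ?thesis using iin ws1[of i] by auto
      next
        case 2
        then have "i = m + (i - m)" "i - m \<in> {1..m}" by auto
        then show ?thesis using ws2[of "i - m"] by (metis max.cobounded2)
      next
        case 3 then show ?thesis using ws3 rowsum by simp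
      qed
    qed
    have img: "(+) m ` {1..m} = {m+1..2*m}" by simp
    have split: "{1..2*m+1} = ({1..m} \<union> (+) m ` {1..m}) \<union> {2*m+1}" unfolding img by auto
    have "(\<Sum>i\<in>{1..2*m+1}. wstar i) = (\<Sum>i\<in>{1..m}. wstar i) + (\<Sum>i\<in>(+) m ` {1..m}. wstar i) + wstar (2*m+1)"
      unfolding split img by (subst sum.union_disjoint, auto)+
    also have "(\<Sum>i\<in>(+) m ` {1..m}. wstar i) = (\<Sum>j\<in>{1..m}. wstar (m + j))"
      by (subst sum.reindex) (auto simp: inj_on_def)
    also have "(\<Sum>i\<in>{1..m}. wstar i) + (\<Sum>j\<in>{1..m}. wstar (m + j)) = (\<Sum>j\<in>{1..m}. \<bar>A (Suc m) j\<bar>)"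
      unfolding sum.distrib[symmetric] by (intro sum.cong refl) (simp add: ws1 ws2)
    finally have "(\<Sum>i\<in>{1..2*m+1}. wstar i) = lam" using ws3 by simp
    then show ?thesis unfolding simplexW_def n using nonneg ws0 by auto
  qed
  have P2: "\<forall>k\<in>{1..2*n-1}. ((\<lambda>t. simplex_ISO n A (wstar(k := t))) has_real_derivative 0) (at (wstar k))"
  proof
    fix k
    define c :: "nat \<Rightarrow> real" where "c j = - ((if j = k then 1 else 0) - (if m + j = k then 1 else 0))" for j
    have "(\<Sum>z\<in>spins (Suc m). ising_weight (Suc m) A (\<lambda>_. 0) z *
        (exp (- (\<Sum>j\<in>{1..m}. (wstar j - wstar (m + j)) * z (Suc m) * z j)) *
         (- (\<Sum>j\<in>{1..m}. ((if j = k then 1 else 0) - (if m + j = k then 1 else 0)) * z (Suc m) * z j))))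
       = (\<Sum>z\<in>spins (Suc m). ising_weight (Suc m) A (\<lambda>_. 0) z *
        (exp (- (\<Sum>j\<in>{1..m}. A (Suc m) j * z (Suc m) * z j)) *
         (\<Sum>j\<in>{1..m}. c j * z (Suc m) * z j)))"
    proof (intro sum.cong refl)
      fix z :: "nat \<Rightarrow> real"
      have a: "(\<Sum>j\<in>{1..m}. (wstar j - wstar (m + j)) * z (Suc m) * z j) = (\<Sum>j\<in>{1..m}. A (Suc m) j * z (Suc m) * z j)"
        using wj by (intro sum.cong refl) simp
      have b: "- (\<Sum>j\<in>{1..m}. ((if j = k then 1 else 0) - (if m + j = k then 1 else 0)) * z (Suc m) * z j) = (\<Sum>j\<in>{1..m}. c j * z (Suc m) * z j)"
        unfolding c_def sum_negf[symmetric] by (intro sum.cong refl) simp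
      show "ising_weight (Suc m) A (\<lambda>_. 0) z *
        (exp (- (\<Sum>j\<in>{1..m}. (wstar j - wstar (m + j)) * z (Suc m) * z j)) *
         (- (\<Sum>j\<in>{1..m}. ((if j = k then 1 else 0) - (if m + j = k then 1 else 0)) * z (Suc m) * z j)))
       = ising_weight (Suc m) A (\<lambda>_. 0) z *
        (exp (- (\<Sum>j\<in>{1..m}. A (Suc m) j * z (Suc m) * z j)) *
         (\<Sum>j\<in>{1..m}. c j * z (Suc m) * z j))" unfolding a b ..
    qed
    also have "\<dots> = 0" by (rule key2[OF sym])
    finally have z: "(\<Sum>z\<in>spins (Suc m). ising_weight (Suc m) A (\<lambda>_. 0) z *
        (exp (- (\<Sum>j\<in>{1..m}. (wstar j - wstar (m + j)) * z (Suc m) * z j)) *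
         (- (\<Sum>j\<in>{1..m}. ((if j = k then 1 else 0) - (if m + j = k then 1 else 0)) * z (Suc m) * z j)))) = 0" .
    show "((\<lambda>t. simplex_ISO n A (wstar(k := t))) has_real_derivative 0) (at (wstar k))"
      using deriv_gen[of m A wstar k] unfolding n z by simp
  qed
  have P3: "\<forall>w\<in>simplexW lam (2*n - 1). simplex_ISO n A wstar \<le> simplex_ISO n A w"
    using min_gen[OF sym wj] unfolding n by blast
  show ?thesis using P1 P2 P3 by blast
qed

end
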